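(* Let $\mathcal{G}^c=(\mathbb{C},\mathbb{E}^c)$ be a C-DMG, $\mathcal{G}$ a DMG compatible with it, $\mathbb{C}_A\subseteq\mathbb{C}$ a set of clusters and $A=\bigcup_{C\in\mathbb{C}_A}C$. Let $\mathcal{G}^c_{\overline{\mathbb{C}_A}}$ and $\mathcal{G}_{\overline{A}}$ be the graphs obtained by intervening on $\mathbb{C}_A$ in $\mathcal{G}^c$ and on $A$ in $\mathcal{G}$. Then $\mathcal{G}_{\overline{A}}$ is compatible with $\mathcal{G}^c_{\overline{\mathbb{C}_A}}$. Moreover, if $\mathcal{M}(\mathcal{G}^c)$ denotes the maximal compatible DMG of $\mathcal{G}^c$, then $\mathcal{M}(\mathcal{G}^c)_{\overline{A}}$ and $\mathcal{M}(\mathcal{G}^c_{\overline{\mathbb{C}_A}})$ are the same graph.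
   Context: A DMG has directed edges $\to$ and bidirected edges $\leftrightarrow$, cycles allowed. Given a graph $\mathcal{G}=(\mathbb{V},\mathbb{E})$ and a partition $\mathbb{C}$ of $\mathbb{V}$ into nonempty clusters, $\mathcal{G}$ is compatible with $\mathcal{G}^c=(\mathbb{C},\mathbb{E}^c)$ if for all $C_i,C_j\in\mathbb{C}$ (possibly equal), $C_i\to C_j$ (resp. $C_i\leftrightarrow C_j$) is in $\mathbb{E}^c$ iff there exist $V_i\in C_i,V_j\in C_j$ with $V_i\to V_j$ (resp. $V_i\leftrightarrow V_j$) in $\mathbb{E}$; a C-DMG is such a $\mathcal{G}^c$ for some DMG. Intervening on a vertex set $D$ in a graph means removing all directed edges whose head is in $D$ and all bidirected edges with an endpoint in $D$. The maximal compatible DMG $\mathcal{M}(\mathcal{G}^c)$ of a C-DMG $\mathcal{G}^c$ has vertex set $\bigcup_{C\in\mathbb{C}}C$, directed edges $V\to V'$ for all $V\in C,V'\in C'$ with $C\to C'\in\mathbb{E}^c$, and bidirected edges $V\leftrightarrow V'$ for all $V\in C,V'\in C'$ with $C\leftrightarrow C'\in\mathbb{E}^c$. *)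

theory Defs
  imports Main
begin

text \<open>A directed mixed graph (DMG), cycles allowed: vertex set, directed edges
 (pairs (u,v) meaning u \<rightarrow> v, self-loops allowed), bidirected edges
 (pairs (u,v) meaning u \<leftrightarrow> v, stored symmetrically).\<close>
record 'v mgraph =
  verts :: "'v set"
  dir :: "('v \<times> 'v) set"
  bidir :: "('v \<times> 'v) set"

definition is_DMG :: "'v mgraph \<Rightarrow> bool" where
  "is_DMG G \<longleftrightarrow> dir G \<subseteq> verts G \<times> verts G \<and> bidir G \<subseteq> verts G \<times> verts G
     \<and> sym (bidir G)"

definition is_partition :: "'a set set \<Rightarrow> 'a set \<Rightarrow> bool" where
  "is_partition CC V \<longleftrightarrow> \<Union>CC = V \<and> {} \<notin> CC
     \<and> (\<forall>C1\<in>CC. \<forall>C2\<in>CC. C1 \<noteq> C2 \<longrightarrow> C1 \<inter> C2 = {})"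

definition compatible :: "'a mgraph \<Rightarrow> 'a set mgraph \<Rightarrow> bool" where
  "compatible G Gc \<longleftrightarrow> is_DMG G \<and> is_partition (verts Gc) (verts G) \<and>
     (\<forall>Ci\<in>verts Gc. \<forall>Cj\<in>verts Gc.
        ((Ci, Cj) \<in> dir Gc \<longleftrightarrow> (\<exists>Vi\<in>Ci. \<exists>Vj\<in>Cj. (Vi, Vj) \<in> dir G)) \<and>
        ((Ci, Cj) \<in> bidir Gc \<longleftrightarrow> (\<exists>Vi\<in>Ci. \<exists>Vj\<in>Cj. (Vi, Vj) \<in> bidir G))) \<and>
     dir Gc \<subseteq> verts Gc \<times> verts Gc \<and> bidir Gc \<subseteq> verts Gc \<times> verts Gc"

definition is_CDMG :: "'a set mgraph \<Rightarrow> bool" where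
  "is_CDMG Gc \<longleftrightarrow> (\<exists>G. compatible G Gc)"

definition intervene :: "'v mgraph \<Rightarrow> 'v set \<Rightarrow> 'v mgraph" where
  "intervene G D = \<lparr> verts = verts G,
     dir = {(u, v) \<in> dir G. v \<notin> D},
     bidir = {(u, v) \<in> bidir G. u \<notin> D \<and> v \<notin> D} \<rparr>"

definition maximal_DMG :: "'a set mgraph \<Rightarrow> 'a mgraph" where
  "maximal_DMG Gc = \<lparr> verts = \<Union>(verts Gc),
     dir = {(V, V'). \<exists>C C'. (C, C') \<in> dir Gc \<and> V \<in> C \<and> V' \<in> C'},
     bidir = {(V, V'). \<exists>C C'. (C, C') \<in> bidir Gc \<and> V \<in> C \<and> V' \<in> C'} \<rparr>"

end

theory Submission
  imports Defs
begin

lemma key: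
  assumes "is_partition CC V" "CA \<subseteq> CC" "C \<in> CC" "v \<in> C"
  shows "v \<in> \<Union>CA \<longleftrightarrow> C \<in> CA"
proof
  assume "v \<in> \<Union>CA"
  then obtain D where D: "D \<in> CA" "v \<in> D" by blast
  have "D \<in> CC" using D assms(2) by blast
  have disj: "\<forall>C1\<in>CC. \<forall>C2\<in>CC. C1 \<noteq> C2 \<longrightarrow> C1 \<inter> C2 = {}"
    using assms(1) unfolding is_partition_def by simp
  have "D = C"
  proof (rule ccontr)
    assume "D \<noteq> C"
    then have "D \<inter> C = {}" using disj \<open>D \<in> CC\<close> assms(3) by simp
    then show False using D(2) assms(4) by blast
  qed
  then show "C \<in> CA" using D by simp
next
  assume "C \<in> CA" then show "v \<in> \<Union>CA" using assms(4) by blast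
qed

theorem mainTheorem6:
  fixes Gc :: "'a set mgraph" and G :: "'a mgraph" and CA :: "'a set set"
  assumes "is_CDMG Gc"
    and "compatible G Gc"
    and "CA \<subseteq> verts Gc"
    and "A = \<Union>CA"
  shows "compatible (intervene G A) (intervene Gc CA)
     \<and> intervene (maximal_DMG Gc) A = maximal_DMG (intervene Gc CA)"
proof
  have C: "is_DMG G" "is_partition (verts Gc) (verts G)"
    "\<forall>Ci\<in>verts Gc. \<forall>Cj\<in>verts Gc.
        ((Ci, Cj) \<in> dir Gc \<longleftrightarrow> (\<exists>Vi\<in>Ci. \<exists>Vj\<in>Cj. (Vi, Vj) \<in> dir G)) \<and>
        ((Ci, Cj) \<in> bidir Gc \<longleftrightarrow> (\<exists>Vi\<in>Ci. \<exists>Vj\<in>Cj. (Vi, Vj) \<in> bidir G))"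
    "dir Gc \<subseteq> verts Gc \<times> verts Gc" "bidir Gc \<subseteq> verts Gc \<times> verts Gc"
    using assms(2) unfolding compatible_def by auto
  note K = key[OF C(2) assms(3)]
  show "compatible (intervene G A) (intervene Gc CA)"
    unfolding compatible_def
  proof (intro conjI)
    show "is_DMG (intervene G A)" using C(1)
      unfolding is_DMG_def intervene_def sym_def by auto
    show "is_partition (verts (intervene Gc CA)) (verts (intervene G A))"
      using C(2) by (simp add: intervene_def)
    show "\<forall>Ci\<in>verts (intervene Gc CA). \<forall>Cj\<in>verts (intervene Gc CA).
       ((Ci, Cj) \<in> dir (intervene Gc CA)) = (\<exists>Vi\<in>Ci. \<exists>Vj\<in>Cj. (Vi, Vj) \<in> dir (intervene G A)) \<and>
       ((Ci, Cj) \<in> bidir (intervene Gc CA)) = (\<exists>Vi\<in>Ci. \<exists>Vj\<in>Cj. (Vi, Vj) \<in> bidir (intervene G A))"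
    proof (intro ballI conjI)
      fix Ci Cj assume h: "Ci \<in> verts (intervene Gc CA)" "Cj \<in> verts (intervene Gc CA)"
      hence h': "Ci \<in> verts Gc" "Cj \<in> verts Gc" by (auto simp: intervene_def)
      show "((Ci, Cj) \<in> dir (intervene Gc CA)) = (\<exists>Vi\<in>Ci. \<exists>Vj\<in>Cj. (Vi, Vj) \<in> dir (intervene G A))"
      proof -
        have e: "(Ci,Cj) \<in> dir Gc \<longleftrightarrow> (\<exists>Vi\<in>Ci. \<exists>Vj\<in>Cj. (Vi,Vj) \<in> dir G)" using C(3) h' by blast
        have k: "\<And>v. v \<in> Cj \<Longrightarrow> v \<notin> A \<longleftrightarrow> Cj \<notin> CA" using K[OF h'(2)] assms(4) by simp
        show ?thesis unfolding intervene_def using e k by auto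
      qed
      show "((Ci, Cj) \<in> bidir (intervene Gc CA)) = (\<exists>Vi\<in>Ci. \<exists>Vj\<in>Cj. (Vi, Vj) \<in> bidir (intervene G A))"
      proof -
        have e: "(Ci,Cj) \<in> bidir Gc \<longleftrightarrow> (\<exists>Vi\<in>Ci. \<exists>Vj\<in>Cj. (Vi,Vj) \<in> bidir G)" using C(3) h' by blast
        have k: "\<And>v. v \<in> Cj \<Longrightarrow> v \<notin> A \<longleftrightarrow> Cj \<notin> CA" using K[OF h'(2)] assms(4) by simp
        have k2: "\<And>v. v \<in> Ci \<Longrightarrow> v \<notin> A \<longleftrightarrow> Ci \<notin> CA" using K[OF h'(1)] assms(4) by simp
        show ?thesis unfolding intervene_def using e k k2 by auto
      qed
    qed
    show "dir (intervene Gc CA) \<subseteq> verts (intervene Gc CA) \<times> verts (intervene Gc CA)"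
      using C(4) by (auto simp: intervene_def)
    show "bidir (intervene Gc CA) \<subseteq> verts (intervene Gc CA) \<times> verts (intervene Gc CA)"
      using C(5) by (auto simp: intervene_def)
  qed
  have d1: "(V,V') \<in> dir (intervene (maximal_DMG Gc) A) \<longleftrightarrow> (V,V') \<in> dir (maximal_DMG (intervene Gc CA))" for V V'
  proof -
    have "(\<exists>C C'. (C, C') \<in> dir Gc \<and> V \<in> C \<and> V' \<in> C' \<and> V' \<notin> A) \<longleftrightarrow>
          (\<exists>C C'. (C, C') \<in> dir Gc \<and> C' \<notin> CA \<and> V \<in> C \<and> V' \<in> C')"
    proof (intro iffI; elim exE conjE)
      fix C C' assume "(C, C') \<in> dir Gc" "V \<in> C" "V' \<in> C'" "V' \<notin> A"
      moreover have "C' \<in> verts Gc" using C(4) calculation(1) by blast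
      ultimately have "C' \<notin> CA" using K[of C' V'] assms(4) by simp
      with \<open>(C, C') \<in> dir Gc\<close> \<open>V \<in> C\<close> \<open>V' \<in> C'\<close>
      show "\<exists>C C'. (C, C') \<in> dir Gc \<and> C' \<notin> CA \<and> V \<in> C \<and> V' \<in> C'" by blast
    next
      fix C C' assume "(C, C') \<in> dir Gc" "V \<in> C" "V' \<in> C'" "C' \<notin> CA"
      moreover have "C' \<in> verts Gc" using C(4) calculation(1) by blast
      ultimately have "V' \<notin> A" using K[of C' V'] assms(4) by simp
      with \<open>(C, C') \<in> dir Gc\<close> \<open>V \<in> C\<close> \<open>V' \<in> C'\<close>
      show "\<exists>C C'. (C, C') \<in> dir Gc \<and> V \<in> C \<and> V' \<in> C' \<and> V' \<notin> A" by blast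
    qed
    then show ?thesis unfolding intervene_def maximal_DMG_def by simp blast
  qed
  have b1: "(V,V') \<in> bidir (intervene (maximal_DMG Gc) A) \<longleftrightarrow> (V,V') \<in> bidir (maximal_DMG (intervene Gc CA))" for V V'
  proof -
    have "(\<exists>C C'. (C, C') \<in> bidir Gc \<and> V \<in> C \<and> V' \<in> C' \<and> V \<notin> A \<and> V' \<notin> A) \<longleftrightarrow>
          (\<exists>C C'. (C, C') \<in> bidir Gc \<and> C \<notin> CA \<and> C' \<notin> CA \<and> V \<in> C \<and> V' \<in> C')"
    proof (intro iffI; elim exE conjE)
      fix C C' assume "(C, C') \<in> bidir Gc" "V \<in> C" "V' \<in> C'" "V \<notin> A" "V' \<notin> A"
      moreover have "C' \<in> verts Gc" "C \<in> verts Gc" using C(5) calculation(1) by blast+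
      ultimately have "C \<notin> CA" "C' \<notin> CA" using K[of C' V'] K[of C V] assms(4) by simp_all
      with \<open>(C, C') \<in> bidir Gc\<close> \<open>V \<in> C\<close> \<open>V' \<in> C'\<close>
      show "\<exists>C C'. (C, C') \<in> bidir Gc \<and> C \<notin> CA \<and> C' \<notin> CA \<and> V \<in> C \<and> V' \<in> C'" by blast
    next
      fix C C' assume "(C, C') \<in> bidir Gc" "V \<in> C" "V' \<in> C'" "C \<notin> CA" "C' \<notin> CA"
      moreover have "C' \<in> verts Gc" "C \<in> verts Gc" using C(5) calculation(1) by blast+
      ultimately have "V \<notin> A" "V' \<notin> A" using K[of C' V'] K[of C V] assms(4) by simp_all
      with \<open>(C, C') \<in> bidir Gc\<close> \<open>V \<in> C\<close> \<open>V' \<in> C'\<close>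
      show "\<exists>C C'. (C, C') \<in> bidir Gc \<and> V \<in> C \<and> V' \<in> C' \<and> V \<notin> A \<and> V' \<notin> A" by blast
    qed
    then show ?thesis unfolding intervene_def maximal_DMG_def by simp blast
  qed
  have d: "dir (intervene (maximal_DMG Gc) A) = dir (maximal_DMG (intervene Gc CA))"
    using d1 by auto
  have b: "bidir (intervene (maximal_DMG Gc) A) = bidir (maximal_DMG (intervene Gc CA))"
    using b1 by auto
  show "intervene (maximal_DMG Gc) A = maximal_DMG (intervene Gc CA)"
    using d b by (simp add: intervene_def maximal_DMG_def)
qed

end
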